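(* Let $d\ge3$. Suppose that $\det H(X,Y)\ne0$ for every generic pair $(X,Y)$ of matrices in $M_d(\mathbb{C})$. Then $H(X,Y)$ is positive semidefinite for all $X,Y\in M_d(\mathbb{C})$. Here $H(X,Y)$ is the hermitian matrix of order $2d^2$ given by $H=H_1-\tfrac12(H_2+H_3)+\tfrac14H_4$ with $$H_1=\begin{bmatrix}\|X\|^2&\operatorname{tr}(X^\dagger Y)\\ \operatorname{tr}(Y^\dagger X)&\|Y\|^2\end{bmatrix}\otimes I_{d^2},\qquad H_2=\begin{bmatrix}X^\dagger X&X^\dagger Y\\ Y^\dagger X&Y^\dagger Y\end{bmatrix}\otimes I_d,$$ $$H_3=\begin{bmatrix}I_d\otimes X^*X^T&I_d\otimes X^*Y^T\\ I_d\otimes Y^*X^T&I_d\otimes Y^*Y^T\end{bmatrix},\qquad H_4=\begin{bmatrix}\tilde X^*\tilde X^T&\tilde X^*\tilde Y^T\\ \tilde Y^*\tilde X^T&\tilde Y^*\tilde Y^T\end{bmatrix}.$$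
   Context: A pair $(X,Y)$ of matrices in $M_d(\mathbb{C})$ is generic if $X$ and $Y$ are linearly independent and some linear combination of $X$ and $Y$ is nonsingular. $Z^*$ is the entrywise complex conjugate, $Z^T$ the transpose, $Z^\dagger$ the conjugate transpose, $\|Z\|^2=\operatorname{tr}(Z^\dagger Z)$, $I_m$ the identity matrix of order $m$, and $A\otimes B=[a_{ij}B]$ for $A=[a_{ij}]$. For a matrix $Z$, $\tilde Z$ is the column vector obtained by stacking the columns of $Z$ one below the other, starting with the first. *)

theory Defs
  imports "Jordan_Normal_Form.Determinant" Complex_Main
begin

definition kron :: "complex mat \<Rightarrow> complex mat \<Rightarrow> complex mat" where
  "kron A B = mat (dim_row A * dim_row B) (dim_col A * dim_col B)
     (\<lambda>(i,j). A $$ (i div dim_row B, j div dim_col B) * B $$ (i mod dim_row B, j mod dim_col B))"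

text \<open>Entrywise conjugate Z^*, and conjugate transpose Z^dagger.\<close>
definition conj_mat :: "complex mat \<Rightarrow> complex mat" where
  "conj_mat Z = map_mat cnj Z"

definition dag :: "complex mat \<Rightarrow> complex mat" where
  "dag Z = conj_mat (transpose_mat Z)"

definition mtrace :: "complex mat \<Rightarrow> complex" where
  "mtrace A = (\<Sum>i<dim_row A. A $$ (i,i))"

definition fnorm2 :: "complex mat \<Rightarrow> complex" where
  "fnorm2 Z = mtrace (dag Z * Z)"

text \<open>Column stacking: tilde Z as a (rows*cols) x 1 column matrix, columns stacked starting with the first.\<close>
definition vecm :: "complex mat \<Rightarrow> complex mat" where
  "vecm Z = mat (dim_row Z * dim_col Z) 1 (\<lambda>(k,_). Z $$ (k mod dim_row Z, k div dim_row Z))"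

definition mat2 :: "complex \<Rightarrow> complex \<Rightarrow> complex \<Rightarrow> complex \<Rightarrow> complex mat" where
  "mat2 a b c e = mat 2 2 (\<lambda>(i,j). if i = 0 then (if j = 0 then a else b) else (if j = 0 then c else e))"

definition H1 :: "nat \<Rightarrow> complex mat \<Rightarrow> complex mat \<Rightarrow> complex mat" where
  "H1 d X Y = kron (mat2 (fnorm2 X) (mtrace (dag X * Y)) (mtrace (dag Y * X)) (fnorm2 Y)) (1\<^sub>m (d*d))"

definition H2 :: "nat \<Rightarrow> complex mat \<Rightarrow> complex mat \<Rightarrow> complex mat" where
  "H2 d X Y = kron (four_block_mat (dag X * X) (dag X * Y) (dag Y * X) (dag Y * Y)) (1\<^sub>m d)"

definition H3 :: "nat \<Rightarrow> complex mat \<Rightarrow> complex mat \<Rightarrow> complex mat" where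
  "H3 d X Y = four_block_mat
     (kron (1\<^sub>m d) (conj_mat X * transpose_mat X)) (kron (1\<^sub>m d) (conj_mat X * transpose_mat Y))
     (kron (1\<^sub>m d) (conj_mat Y * transpose_mat X)) (kron (1\<^sub>m d) (conj_mat Y * transpose_mat Y))"

definition H4 :: "complex mat \<Rightarrow> complex mat \<Rightarrow> complex mat" where
  "H4 X Y = four_block_mat
     (conj_mat (vecm X) * transpose_mat (vecm X)) (conj_mat (vecm X) * transpose_mat (vecm Y))
     (conj_mat (vecm Y) * transpose_mat (vecm X)) (conj_mat (vecm Y) * transpose_mat (vecm Y))"

definition HH :: "nat \<Rightarrow> complex mat \<Rightarrow> complex mat \<Rightarrow> complex mat" where
  "HH d X Y = H1 d X Y - (1/2 :: complex) \<cdot>\<^sub>m (H2 d X Y + H3 d X Y) + (1/4 :: complex) \<cdot>\<^sub>m H4 X Y"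

definition generic_pair :: "complex mat \<Rightarrow> complex mat \<Rightarrow> bool" where
  "generic_pair X Y \<longleftrightarrow>
     (\<forall>a b :: complex. a \<cdot>\<^sub>m X + b \<cdot>\<^sub>m Y = 0\<^sub>m (dim_row X) (dim_col X) \<longrightarrow> a = 0 \<and> b = 0) \<and>
     (\<exists>a b :: complex. det (a \<cdot>\<^sub>m X + b \<cdot>\<^sub>m Y) \<noteq> 0)"

definition psd :: "complex mat \<Rightarrow> bool" where
  "psd H \<longleftrightarrow> H \<in> carrier_mat (dim_row H) (dim_row H) \<and> dag H = H \<and>
     (\<forall>v \<in> carrier_vec (dim_row H).
        let q = (\<Sum>i<dim_row H. cnj (v $ i) * (H *\<^sub>v v) $ i) in Im q = 0 \<and> Re q \<ge> 0)"

end

theory Submission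
  imports Defs "Jordan_Normal_Form.Char_Poly" "HOL-Analysis.Function_Topology" "HOL-Analysis.Elementary_Metric_Spaces"
begin


lemma mult_entry:
  assumes "A \<in> carrier_mat n m" "B \<in> carrier_mat m k" "i < n" "j < k"
  shows "(A * B) $$ (i,j) = (\<Sum>l<m. A $$ (i,l) * B $$ (l,j))"
  using assms by (auto simp: scalar_prod_def atLeast0LessThan intro!: sum.cong)

lemma dag_carrier[simp]: "X \<in> carrier_mat n m \<Longrightarrow> dag X \<in> carrier_mat m n"
  by (auto simp: dag_def conj_mat_def)
lemma dag_dim[simp]: "dim_row (dag X) = dim_col X" "dim_col (dag X) = dim_row X"
  by (auto simp: dag_def conj_mat_def)
lemma dag_entry[simp]: "X \<in> carrier_mat n m \<Longrightarrow> i < m \<Longrightarrow> j < n \<Longrightarrow> dag X $$ (i,j) = cnj (X $$ (j,i))"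
  by (auto simp: dag_def conj_mat_def)
lemma conj_carrier[simp]: "X \<in> carrier_mat n m \<Longrightarrow> conj_mat X \<in> carrier_mat n m"
  by (auto simp: conj_mat_def)
lemma conj_dim[simp]: "dim_row (conj_mat X) = dim_row X" "dim_col (conj_mat X) = dim_col X"
  by (auto simp: conj_mat_def)
lemma conj_entry[simp]: "X \<in> carrier_mat n m \<Longrightarrow> i < n \<Longrightarrow> j < m \<Longrightarrow> conj_mat X $$ (i,j) = cnj (X $$ (i,j))"
  by (auto simp: conj_mat_def)
lemma kron_carrier[simp]: "kron A B \<in> carrier_mat (dim_row A * dim_row B) (dim_col A * dim_col B)"
  by (simp add: kron_def)
lemma kron_entry: "i < dim_row A * dim_row B \<Longrightarrow> j < dim_col A * dim_col B \<Longrightarrow>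
   kron A B $$ (i,j) = A $$ (i div dim_row B, j div dim_col B) * B $$ (i mod dim_row B, j mod dim_col B)"
  by (simp add: kron_def)
lemma vecm_carrier[simp]: "vecm Z \<in> carrier_mat (dim_row Z * dim_col Z) 1"
  by (simp add: vecm_def)

definition zz :: "'a \<Rightarrow> 'a \<Rightarrow> nat \<Rightarrow> 'a" where "zz x y p = (if p = 0 then x else y)"

definition hb :: "nat \<Rightarrow> (nat\<Rightarrow>nat\<Rightarrow>complex) \<Rightarrow> (nat\<Rightarrow>nat\<Rightarrow>complex) \<Rightarrow> nat \<Rightarrow> nat \<Rightarrow> nat \<Rightarrow> nat \<Rightarrow> complex" where
 "hb d x y p q r s =
   (if r = s then (\<Sum>i<d. \<Sum>k<d. cnj (zz x y p k i) * zz x y q k i) else 0)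
   - 1/2 * ((if r mod d = s mod d then (\<Sum>k<d. cnj (zz x y p k (r div d)) * zz x y q k (s div d)) else 0)
          + (if r div d = s div d then (\<Sum>k<d. cnj (zz x y p (r mod d) k) * zz x y q (s mod d) k) else 0))
   + 1/4 * (cnj (zz x y p (r mod d) (r div d)) * zz x y q (s mod d) (s div d))"

definition ent :: "complex mat \<Rightarrow> nat \<Rightarrow> nat \<Rightarrow> complex" where "ent X a b = X $$ (a,b)"

lemma mtrace_eq: "X \<in> carrier_mat d d \<Longrightarrow> Y \<in> carrier_mat d d \<Longrightarrow>
   mtrace (dag X * Y) = (\<Sum>i<d. \<Sum>k<d. cnj (X $$ (k,i)) * Y $$ (k,i))"
proof -
  assume a: "X \<in> carrier_mat d d" "Y \<in> carrier_mat d d"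
  then have "dim_row (dag X * Y) = d" by simp
  then show ?thesis using a
    by (auto simp del: index_mult_mat simp add: mtrace_def mult_entry[of "dag X" d d Y d] intro!: sum.cong)
qed

lemma divmod_split:
  fixes d p r :: nat assumes "r < d*d" "0 < d"
  shows "(p*(d*d)+r) div d = p*d + r div d" "(p*(d*d)+r) mod d = r mod d"
proof -
  have e: "p*(d*d)+r = r + (p*d)*d" by (simp add: mult.assoc)
  show "(p*(d*d)+r) div d = p*d + r div d" unfolding e using assms div_mult_self1[of d r "p*d"] by simp
  show "(p*(d*d)+r) mod d = r mod d" unfolding e using assms by simp
qed

lemma divmod_split2:
  fixes d p r :: nat assumes "r < d*d"
  shows "(p*(d*d)+r) div (d*d) = p" "(p*(d*d)+r) mod (d*d) = r"
proof -
  have e: "p*(d*d)+r = r + p*(d*d)" by simp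
  have "d*d \<noteq> 0" using assms by (cases "d=0") auto
  then show "(p*(d*d)+r) div (d*d) = p" unfolding e using assms div_mult_self1[of "d*d" r p] by simp
  show "(p*(d*d)+r) mod (d*d) = r" unfolding e using assms by simp
qed

lemma H1_entry:
  assumes X: "X \<in> carrier_mat d d" and Y: "Y \<in> carrier_mat d d" and "p < 2" "q < 2" "r < d*d" "s < d*d"
  shows "H1 d X Y $$ (p*(d*d)+r, q*(d*d)+s) =
     (if r = s then (\<Sum>i<d. \<Sum>k<d. cnj (zz (ent X) (ent Y) p k i) * zz (ent X) (ent Y) q k i) else 0)"
proof -
  have lt: "p*(d*d)+r < 2*(d*d)" "q*(d*d)+s < 2*(d*d)" using assms by (auto simp: less_2_cases_iff)
  have dp: "d > 0" using assms by (cases d) auto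
  have a: "(p*(d*d)+r) div (d*d) = p" "(p*(d*d)+r) mod (d*d) = r"
         "(q*(d*d)+s) div (d*d) = q" "(q*(d*d)+s) mod (d*d) = s" using assms divmod_split2 by auto
  show ?thesis using lt assms
    unfolding H1_def kron_entry[of _ "mat2 _ _ _ _" "1\<^sub>m (d*d)", simplified] 
    by (auto simp: kron_entry mat2_def a mtrace_eq fnorm2_def zz_def ent_def less_2_cases_iff)
qed

lemma fb_entry:
  assumes "A \<in> carrier_mat n n" "B \<in> carrier_mat n n" "C \<in> carrier_mat n n" "D \<in> carrier_mat n n"
    "p < 2" "q < 2" "a < n" "b < n"
  shows "four_block_mat A B C D $$ (p*n+a, q*n+b) = zz (zz A B q) (zz C D q) p $$ (a,b)"
  using assms by (auto simp: less_2_cases_iff zz_def)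

lemma fb_carrier: "A \<in> carrier_mat n n \<Longrightarrow> D \<in> carrier_mat n n \<Longrightarrow> four_block_mat A B C D \<in> carrier_mat (n+n) (n+n)"
  by simp

lemma H2_entry:
  assumes X: "X \<in> carrier_mat d d" and Y: "Y \<in> carrier_mat d d" and pq: "p < 2" "q < 2" and rs: "r < d*d" "s < d*d"
  shows "H2 d X Y $$ (p*(d*d)+r, q*(d*d)+s) =
     (if r mod d = s mod d then (\<Sum>k<d. cnj (zz (ent X) (ent Y) p k (r div d)) * zz (ent X) (ent Y) q k (s div d)) else 0)"
proof -
  have dp: "0 < d" using rs by (cases "d=0") auto
  let ?F = "four_block_mat (dag X * X) (dag X * Y) (dag Y * X) (dag Y * Y)"
  have F: "?F \<in> carrier_mat (d+d) (d+d)" using X Y by (intro fb_carrier) auto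
  have lt: "p*(d*d)+r < (d+d)*d" "q*(d*d)+s < (d+d)*d" using pq rs by (auto simp: less_2_cases_iff algebra_simps)
  have rd: "r div d < d" "s div d < d" using rs by (auto simp: less_mult_imp_div_less)
  have "H2 d X Y $$ (p*(d*d)+r, q*(d*d)+s) = ?F $$ (p*d + r div d, q*d + s div d) * (if r mod d = s mod d then 1 else 0)"
  proof -
    have dims: "dim_row ?F = d+d" "dim_col ?F = d+d" using F by auto
    have "H2 d X Y $$ (p*(d*d)+r, q*(d*d)+s) = ?F $$ ((p*(d*d)+r) div d, (q*(d*d)+s) div d) * 1\<^sub>m d $$ ((p*(d*d)+r) mod d, (q*(d*d)+s) mod d)"
      unfolding H2_def using lt dims by (subst kron_entry) auto
    then show ?thesis using dp rs by (simp add: divmod_split[OF rs(1) dp] divmod_split[OF rs(2) dp])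
  qed
  also have "?F $$ (p*d + r div d, q*d + s div d) = zz (zz (dag X * X) (dag X * Y) q) (zz (dag Y * X) (dag Y * Y) q) p $$ (r div d, s div d)"
    by (rule fb_entry) (use X Y pq rd in auto)
  also have "\<dots> = (\<Sum>k<d. cnj (zz (ent X) (ent Y) p k (r div d)) * zz (ent X) (ent Y) q k (s div d))"
    using X Y pq rd by (auto simp del: index_mult_mat simp: less_2_cases_iff zz_def ent_def mult_entry[of _ d d _ d])
  finally show ?thesis by simp
qed

lemma H3_entry:
  assumes X: "X \<in> carrier_mat d d" and Y: "Y \<in> carrier_mat d d" and pq: "p < 2" "q < 2" and rs: "r < d*d" "s < d*d"
  shows "H3 d X Y $$ (p*(d*d)+r, q*(d*d)+s) =
     (if r div d = s div d then (\<Sum>k<d. cnj (zz (ent X) (ent Y) p (r mod d) k) * zz (ent X) (ent Y) q (s mod d) k) else 0)"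
proof -
  have dp: "0 < d" using rs by (cases "d=0") auto
  let ?K = "\<lambda>A B. kron (1\<^sub>m d) (conj_mat A * transpose_mat B)"
  have K: "\<And>A B. A \<in> carrier_mat d d \<Longrightarrow> B \<in> carrier_mat d d \<Longrightarrow> ?K A B \<in> carrier_mat (d*d) (d*d)"
    subgoal for A B using kron_carrier[of "1\<^sub>m d" "conj_mat A * transpose_mat B"] by simp
    done
  have rd: "r div d < d" "s div d < d" "r mod d < d" "s mod d < d" using rs dp by (auto simp: less_mult_imp_div_less)
  have "H3 d X Y $$ (p*(d*d)+r, q*(d*d)+s) = zz (zz (?K X X) (?K X Y) q) (zz (?K Y X) (?K Y Y) q) p $$ (r, s)"
    unfolding H3_def by (rule fb_entry) (use X Y pq rs K in auto)
  also have "\<dots> = (if r div d = s div d then 1 else 0) * zz (zz (conj_mat X * transpose_mat X) (conj_mat X * transpose_mat Y) q)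
       (zz (conj_mat Y * transpose_mat X) (conj_mat Y * transpose_mat Y) q) p $$ (r mod d, s mod d)"
    using X Y pq rs rd by (auto simp: less_2_cases_iff zz_def kron_entry)
  also have "\<dots> = (if r div d = s div d then (\<Sum>k<d. cnj (zz (ent X) (ent Y) p (r mod d) k) * zz (ent X) (ent Y) q (s mod d) k) else 0)"
    using X Y pq rd by (auto simp del: index_mult_mat simp: less_2_cases_iff zz_def ent_def mult_entry[of _ d d _ d])
  finally show ?thesis .
qed

lemma H4_entry:
  assumes X: "X \<in> carrier_mat d d" and Y: "Y \<in> carrier_mat d d" and pq: "p < 2" "q < 2" and rs: "r < d*d" "s < d*d"
  shows "H4 X Y $$ (p*(d*d)+r, q*(d*d)+s) =
     cnj (zz (ent X) (ent Y) p (r mod d) (r div d)) * zz (ent X) (ent Y) q (s mod d) (s div d)"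
proof -
  have dp: "0 < d" using rs by (cases "d=0") auto
  let ?K = "\<lambda>A B. conj_mat (vecm A) * transpose_mat (vecm B)"
  have K: "\<And>A B. A \<in> carrier_mat d d \<Longrightarrow> B \<in> carrier_mat d d \<Longrightarrow> ?K A B \<in> carrier_mat (d*d) (d*d)"
    by (auto simp: vecm_def conj_mat_def)
  have rd: "r div d < d" "s div d < d" "r mod d < d" "s mod d < d" using rs dp by (auto simp: less_mult_imp_div_less)
  have e: "\<And>A B. A \<in> carrier_mat d d \<Longrightarrow> B \<in> carrier_mat d d \<Longrightarrow> ?K A B $$ (r,s) = cnj (A $$ (r mod d, r div d)) * B $$ (s mod d, s div d)"
    using rs by (auto simp: vecm_def conj_mat_def scalar_prod_def)
  have "H4 X Y $$ (p*(d*d)+r, q*(d*d)+s) = zz (zz (?K X X) (?K X Y) q) (zz (?K Y X) (?K Y Y) q) p $$ (r, s)"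
    unfolding H4_def by (rule fb_entry) (use X Y pq rs K in auto)
  also have "\<dots> = cnj (zz (ent X) (ent Y) p (r mod d) (r div d)) * zz (ent X) (ent Y) q (s mod d) (s div d)"
    using X Y pq by (auto simp: less_2_cases_iff zz_def ent_def e)
  finally show ?thesis .
qed

definition hfun :: "nat \<Rightarrow> (nat\<Rightarrow>nat\<Rightarrow>complex) \<Rightarrow> (nat\<Rightarrow>nat\<Rightarrow>complex) \<Rightarrow> nat \<Rightarrow> nat \<Rightarrow> complex" where
  "hfun d x y i j = hb d x y (i div (d*d)) (j div (d*d)) (i mod (d*d)) (j mod (d*d))"

lemma H_dims:
  assumes X: "X \<in> carrier_mat d d" and Y: "Y \<in> carrier_mat d d"
  shows "dim_row (H3 d X Y) = 2*(d*d)" "dim_col (H3 d X Y) = 2*(d*d)"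
        "dim_row (H4 X Y) = 2*(d*d)" "dim_col (H4 X Y) = 2*(d*d)"
  using X Y by (auto simp: H3_def H4_def kron_def vecm_def)

lemma HH_carrier:
  assumes X: "X \<in> carrier_mat d d" and Y: "Y \<in> carrier_mat d d"
  shows "HH d X Y \<in> carrier_mat (2*(d*d)) (2*(d*d))"
proof -
  have "dim_row (HH d X Y) = dim_row (H4 X Y)" "dim_col (HH d X Y) = dim_col (H4 X Y)"
    unfolding HH_def by (simp_all only: index_add_mat index_smult_mat)
  then show ?thesis using H_dims[OF X Y] unfolding carrier_mat_def by simp
qed

lemma HH_entry:
  assumes X: "X \<in> carrier_mat d d" and Y: "Y \<in> carrier_mat d d" and ij: "i < 2*(d*d)" "j < 2*(d*d)"
  shows "HH d X Y $$ (i,j) = hfun d (ent X) (ent Y) i j"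
proof -
  define p q r s where "p = i div (d*d)" "q = j div (d*d)" "r = i mod (d*d)" "s = j mod (d*d)"
  have dd: "0 < d*d" using ij by (cases "d*d") auto
  have pq: "p < 2" "q < 2" using ij by (auto simp: p_q_r_s_def less_mult_imp_div_less)
  have rs: "r < d*d" "s < d*d" using dd by (auto simp: p_q_r_s_def)
  have ie: "i = p*(d*d)+r" "j = q*(d*d)+s" using div_mult_mod_eq[of i "d*d"] div_mult_mod_eq[of j "d*d"] by (simp_all add: p_q_r_s_def)
  have "HH d X Y $$ (i,j) = H1 d X Y $$ (i,j) - 1/2 * (H2 d X Y $$ (i,j) + H3 d X Y $$ (i,j)) + 1/4 * H4 X Y $$ (i,j)"
  proof -
    have d4: "dim_row (1/4 \<cdot>\<^sub>m H4 X Y) = 2*(d*d)" "dim_col (1/4 \<cdot>\<^sub>m H4 X Y) = 2*(d*d)"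
      "dim_row (1/2 \<cdot>\<^sub>m (H2 d X Y + H3 d X Y)) = 2*(d*d)" "dim_col (1/2 \<cdot>\<^sub>m (H2 d X Y + H3 d X Y)) = 2*(d*d)"
      using H_dims[OF X Y] by (simp_all only: index_add_mat index_smult_mat)
    have D: "dim_row (H3 d X Y) = 2*(d*d)" "dim_col (H3 d X Y) = 2*(d*d)"
        "dim_row (H4 X Y) = 2*(d*d)" "dim_col (H4 X Y) = 2*(d*d)" using H_dims[OF X Y] by auto
    have a: "HH d X Y $$ (i,j) = (H1 d X Y - (1/2) \<cdot>\<^sub>m (H2 d X Y + H3 d X Y)) $$ (i,j) + ((1/4) \<cdot>\<^sub>m H4 X Y) $$ (i,j)"
      unfolding HH_def by (rule index_add_mat(1)) (use d4 ij in simp_all)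
    have b: "(H1 d X Y - (1/2) \<cdot>\<^sub>m (H2 d X Y + H3 d X Y)) $$ (i,j) = H1 d X Y $$ (i,j) - ((1/2) \<cdot>\<^sub>m (H2 d X Y + H3 d X Y)) $$ (i,j)"
      by (rule index_minus_mat(1)) (use d4 ij in simp_all)
    have dd3: "dim_row (H2 d X Y + H3 d X Y) = 2*(d*d)" "dim_col (H2 d X Y + H3 d X Y) = 2*(d*d)"
      using D by (simp_all only: index_add_mat)
    have c: "((1/2) \<cdot>\<^sub>m (H2 d X Y + H3 d X Y)) $$ (i,j) = 1/2 * (H2 d X Y + H3 d X Y) $$ (i,j)"
      by (rule index_smult_mat(1)) (use dd3 ij in simp_all)
    have e: "(H2 d X Y + H3 d X Y) $$ (i,j) = H2 d X Y $$ (i,j) + H3 d X Y $$ (i,j)"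
      by (rule index_add_mat(1)) (use D ij in simp_all)
    have f: "((1/4) \<cdot>\<^sub>m H4 X Y) $$ (i,j) = 1/4 * H4 X Y $$ (i,j)"
      by (rule index_smult_mat(1)) (use D ij in simp_all)
    show ?thesis unfolding a b c e f by (rule refl)
  qed
  also have "\<dots> = hb d (ent X) (ent Y) p q r s"
    unfolding ie H1_entry[OF X Y pq rs] H2_entry[OF X Y pq rs] H3_entry[OF X Y pq rs] H4_entry[OF X Y pq rs]
    by (simp only: hb_def)
  finally show ?thesis by (simp add: hfun_def p_q_r_s_def)
qed



definition K0 :: "complex set" where "K0 = (\<lambda>p. Complex (fst p) (snd p)) ` ({-1..1} \<times> {-1..1})"

lemma K0_compact: "compact K0"
  unfolding K0_def
  apply (rule compact_continuous_image)
   apply (rule continuous_on_Complex) apply (rule continuous_on_fst) apply (rule continuous_on_id)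
    apply (rule continuous_on_snd) apply (rule continuous_on_id)
  by (rule compact_Times) auto

lemma K0_mem: "cmod z \<le> 1 \<Longrightarrow> z \<in> K0"
proof -
  assume a: "cmod z \<le> 1"
  have "\<bar>Re z\<bar> \<le> 1" "\<bar>Im z\<bar> \<le> 1" using abs_Re_le_cmod[of z] abs_Im_le_cmod[of z] a by linarith+
  then have "(Re z, Im z) \<in> {-1..1} \<times> {-1..1}" by auto
  moreover have "z = (\<lambda>p. Complex (fst p) (snd p)) (Re z, Im z)" by simp
  ultimately show ?thesis unfolding K0_def by blast
qed


definition nrm :: "nat \<Rightarrow> (nat\<Rightarrow>complex) \<Rightarrow> real" where "nrm n v = (\<Sum>i<n. (cmod (v i))^2)"
definition qf :: "nat \<Rightarrow> (nat\<Rightarrow>nat\<Rightarrow>complex) \<Rightarrow> (nat\<Rightarrow>complex) \<Rightarrow> complex" where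
  "qf n M v = (\<Sum>i<n. \<Sum>j<n. cnj (v i) * M i j * v j)"

lemma cont_coord: "continuous_on S (\<lambda>x::nat\<Rightarrow>'b::topological_space. x i)"
  by (rule continuous_on_subset[OF continuous_on_product_coordinates]) simp

lemma cont_nrm: "continuous_on UNIV (nrm n)"
  unfolding nrm_def
  apply (rule continuous_on_sum) apply (rule continuous_on_power) apply (rule continuous_on_norm) by (rule cont_coord)

lemma cont_qf: "continuous_on UNIV (\<lambda>v. Re (qf n M v))"
  unfolding qf_def
  apply (rule continuous_on_Re) apply (rule continuous_on_sum) apply (rule continuous_on_sum)
  apply (rule continuous_on_mult) apply (rule continuous_on_mult) apply (rule continuous_on_cnj) apply (rule cont_coord)
   apply (rule continuous_on_const) by (rule cont_coord)

definition SPH :: "nat \<Rightarrow> (nat\<Rightarrow>complex) set" where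
  "SPH n = {v. (\<forall>i. v i \<in> (if i<n then K0 else {0})) \<and> nrm n v = 1}"

lemma sphere_compact: "compact (SPH n)"
proof -
  let ?K = "\<lambda>i. if i<n then K0 else {0}"
  have "compactin (product_topology (\<lambda>_. euclidean) UNIV) (PiE UNIV ?K)"
    apply (rule compactin_PiE[THEN iffD2]) apply (rule disjI2) by (simp add: K0_compact)
  hence "compactin euclidean (PiE UNIV ?K)" by (simp only: euclidean_product_topology)
  hence c: "compact (PiE UNIV ?K)" by (simp only: compactin_euclidean_iff)
  have e: "SPH n = PiE UNIV ?K \<inter> {v. nrm n v = 1}"
  proof -
    have "PiE UNIV ?K = {v. \<forall>i. v i \<in> ?K i}" unfolding PiE_def Pi_def extensional_def by blast
    then show ?thesis unfolding SPH_def by blast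
  qed
  have "closed {v. nrm n v = 1}" by (rule closed_Collect_eq) (rule cont_nrm, rule continuous_on_const)
  then show ?thesis unfolding e by (rule compact_Int_closed[OF c])
qed


definition bl :: "nat \<Rightarrow> (nat\<Rightarrow>nat\<Rightarrow>complex) \<Rightarrow> (nat\<Rightarrow>complex) \<Rightarrow> (nat\<Rightarrow>complex) \<Rightarrow> complex" where
  "bl n M a b = (\<Sum>i<n. \<Sum>j<n. cnj (a i) * M i j * b j)"

definition herm :: "nat \<Rightarrow> (nat\<Rightarrow>nat\<Rightarrow>complex) \<Rightarrow> bool" where
  "herm n M \<longleftrightarrow> (\<forall>i<n. \<forall>j<n. M j i = cnj (M i j))"

lemma bl_swap: assumes "herm n M" shows "bl n M b a = cnj (bl n M a b)"
proof -
  have "cnj (bl n M a b) = (\<Sum>i<n. \<Sum>j<n. a i * cnj (M i j) * cnj (b j))" by (simp add: bl_def)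
  also have "\<dots> = (\<Sum>i<n. \<Sum>j<n. cnj (b j) * M j i * a i)"
  proof (intro sum.cong refl)
    fix i j assume ij: "i \<in> {..<n}" "j \<in> {..<n}"
    then have e: "M j i = cnj (M i j)" using assms unfolding herm_def by blast
    show "a i * cnj (M i j) * cnj (b j) = cnj (b j) * M j i * a i"
      unfolding e by (simp add: mult.commute mult.left_commute)
  qed
  also have "\<dots> = bl n M b a" unfolding bl_def by (rule sum.swap)
  finally show ?thesis by simp
qed

lemma qf_bl: "qf n M v = bl n M v v" by (simp add: qf_def bl_def)

lemma qf_real: assumes "herm n M" shows "cnj (qf n M v) = qf n M v" "Im (qf n M v) = 0"
proof -
  show c: "cnj (qf n M v) = qf n M v" unfolding qf_bl by (rule bl_swap[OF assms, of v v, symmetric])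
  have "Im (cnj (qf n M v)) = Im (qf n M v)" using c by simp
  then show "Im (qf n M v) = 0" by simp
qed


lemma qf_comb: "qf n M (\<lambda>i. a i + c * b i) = qf n M a + c * bl n M a b + cnj c * bl n M b a + cnj c * c * qf n M b"
proof -
  have "qf n M (\<lambda>i. a i + c * b i) = (\<Sum>i<n. \<Sum>j<n. cnj (a i) * M i j * a j + c * (cnj (a i) * M i j * b j)
      + cnj c * (cnj (b i) * M i j * a j) + cnj c * c * (cnj (b i) * M i j * b j))"
    unfolding qf_def by (intro sum.cong refl) (simp add: algebra_simps)
  also have "\<dots> = qf n M a + c * bl n M a b + cnj c * bl n M b a + cnj c * c * qf n M b"
    unfolding qf_def bl_def by (simp only: sum.distrib sum_distrib_left)
  finally show ?thesis .
qed

lemma qf_scale: "qf n M (\<lambda>i. c * v i) = cnj c * c * qf n M v"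
  unfolding qf_def by (simp add: algebra_simps sum_distrib_left)

lemma qf_cong: "(\<And>i. i < n \<Longrightarrow> v i = w i) \<Longrightarrow> qf n M v = qf n M w"
  unfolding qf_def by (intro sum.cong refl) auto

lemma nrm_cong: "(\<And>i. i < n \<Longrightarrow> v i = w i) \<Longrightarrow> nrm n v = nrm n w"
  unfolding nrm_def by (intro sum.cong refl) auto

lemma nrm_nonneg: "nrm n v \<ge> 0" unfolding nrm_def by (intro sum_nonneg) auto

lemma nrm_zero: "nrm n v = 0 \<Longrightarrow> i < n \<Longrightarrow> v i = 0"
  unfolding nrm_def using sum_nonneg_eq_0_iff[of "{..<n}" "\<lambda>i. (cmod (v i))^2"] by auto

lemma nrm_ge: "i < n \<Longrightarrow> (cmod (v i))^2 \<le> nrm n v"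
  unfolding nrm_def by (rule member_le_sum) auto

lemma kernel:
  assumes h: "herm n M" and psd: "\<And>w. Re (qf n M w) \<ge> 0" and q0: "Re (qf n M v) = 0"
  shows "\<forall>i<n. (\<Sum>j<n. M i j * v j) = 0"
proof -
  define u where "u i = (\<Sum>j<n. M i j * v j)" for i
  have buv: "bl n M u v = of_real (nrm n u)"
  proof -
    have "bl n M u v = (\<Sum>i<n. cnj (u i) * u i)"
      unfolding bl_def u_def by (simp add: sum_distrib_left mult.assoc)
    also have "\<dots> = (\<Sum>i<n. of_real ((cmod (u i))^2))"
      by (intro sum.cong refl) (metis complex_norm_square mult.commute)
    finally show ?thesis by (simp add: nrm_def)
  qed
  have bvu: "bl n M v u = of_real (nrm n u)"
  proof -
    have "bl n M v u = cnj (bl n M u v)" by (rule bl_swap[OF h, of v u])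
    then show ?thesis unfolding buv by simp
  qed
  have ineq: "0 \<le> - 2 * s * nrm n u + s^2 * Re (qf n M u)" if "s > 0" for s :: real
  proof -
    have "qf n M (\<lambda>i. v i + of_real (-s) * u i) = qf n M v + of_real (-s) * bl n M v u + cnj (of_real (-s)) * bl n M u v + cnj (of_real (-s)) * of_real (-s) * qf n M u"
      by (rule qf_comb)
    then have "Re (qf n M (\<lambda>i. v i + of_real (-s) * u i)) = - 2 * s * nrm n u + s^2 * Re (qf n M u)"
      using q0 by (simp add: buv bvu power2_eq_square)
    then show ?thesis using psd by metis
  qed
  have "nrm n u = 0"
  proof (rule ccontr)
    assume "nrm n u \<noteq> 0"
    then have N: "nrm n u > 0" using nrm_nonneg[of n u] by linarith
    define R where "R = \<bar>Re (qf n M u)\<bar>"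
    define s where "s = nrm n u / (R + 1)"
    have s: "s > 0" using N by (simp add: s_def R_def add_pos_nonneg)
    have "s * R < nrm n u" using N by (simp add: s_def R_def field_simps)
    have "Re (qf n M u) \<le> R" by (simp add: R_def)
    then have "s^2 * Re (qf n M u) \<le> s^2 * R" by (rule mult_left_mono) simp
    also have "s^2 * R = s * (s * R)" by (simp add: power2_eq_square)
    also have "s * (s * R) < s * nrm n u" by (rule mult_strict_left_mono) (use \<open>s * R < nrm n u\<close> s in auto)
    finally have lt: "s^2 * Re (qf n M u) < s * nrm n u" .
    have "0 < s * nrm n u" using s N by simp
    then show False using ineq[OF s] lt by linarith
  qed
  then show ?thesis using nrm_zero unfolding u_def by blast
qed


lemma perturb:
  "cmod (qf n A v - qf n B v) \<le> (\<Sum>i<n. \<Sum>j<n. cmod (A i j - B i j)) * nrm n v"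
proof -
  have "qf n A v - qf n B v = (\<Sum>i<n. \<Sum>j<n. cnj (v i) * (A i j - B i j) * v j)"
    unfolding qf_def by (simp add: algebra_simps sum_subtractf)
  also have "cmod \<dots> \<le> (\<Sum>i<n. \<Sum>j<n. cmod (cnj (v i) * (A i j - B i j) * v j))"
    by (rule order_trans[OF norm_sum sum_mono[OF norm_sum]]) 
  also have "\<dots> \<le> (\<Sum>i<n. \<Sum>j<n. cmod (A i j - B i j) * nrm n v)"
  proof (intro sum_mono)
    fix i j assume ij: "i \<in> {..<n}" "j \<in> {..<n}"
    have a: "cmod (v i) * cmod (v j) \<le> nrm n v"
    proof -
      have "cmod (v i) * cmod (v j) \<le> ((cmod (v i))^2 + (cmod (v j))^2) / 2"
        using sum_squares_bound[of "cmod (v i)" "cmod (v j)"] by simp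
      also have "\<dots> \<le> nrm n v" using nrm_ge[of i n v] nrm_ge[of j n v] ij by simp
      finally show ?thesis .
    qed
    have "cmod (cnj (v i) * (A i j - B i j) * v j) = cmod (A i j - B i j) * (cmod (v i) * cmod (v j))"
      by (simp add: norm_mult)
    also have "\<dots> \<le> cmod (A i j - B i j) * nrm n v" using a by (simp add: mult_left_mono)
    finally show "cmod (cnj (v i) * (A i j - B i j) * v j) \<le> cmod (A i j - B i j) * nrm n v" .
  qed
  also have "\<dots> = (\<Sum>i<n. \<Sum>j<n. cmod (A i j - B i j)) * nrm n v" by (simp add: sum_distrib_right)
  finally show ?thesis .
qed


lemma qf_zero_n: "qf 0 M v = 0" by (simp add: qf_def)

lemma coercive:
  assumes h: "herm n M" and psd: "\<And>w. Re (qf n M w) \<ge> 0"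
    and ns: "\<And>v. (\<forall>i<n. (\<Sum>j<n. M i j * v j) = 0) \<Longrightarrow> (\<forall>i<n. v i = 0)"
  shows "\<exists>c>0. \<forall>v. Re (qf n M v) \<ge> c * nrm n v"
proof (cases "n = 0")
  case True
  then show ?thesis by (intro exI[of _ 1]) (simp add: qf_zero_n nrm_def)
next
  case False
  define e :: "nat \<Rightarrow> complex" where "e i = (if i = 0 then 1 else 0)" for i
  have "nrm n e = (\<Sum>i<n. (if i = 0 then 1 else 0))" unfolding nrm_def e_def by (intro sum.cong refl) auto
  also have "\<dots> = 1" using False by (simp add: sum.delta)
  finally have ne: "e \<in> SPH n" unfolding SPH_def using K0_mem[of 1] K0_mem[of 0] False by (auto simp: e_def)
  obtain v0 where v0: "v0 \<in> SPH n" "\<forall>y\<in>SPH n. Re (qf n M v0) \<le> Re (qf n M y)"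
    using continuous_attains_inf[OF sphere_compact, of n "\<lambda>v. Re (qf n M v)"] ne
      continuous_on_subset[OF cont_qf[of n M]] by blast
  define c where "c = Re (qf n M v0)"
  have c: "c > 0"
  proof (rule ccontr)
    assume "\<not> c > 0"
    then have "Re (qf n M v0) = 0" using psd[of v0] unfolding c_def by linarith
    then have "\<forall>i<n. (\<Sum>j<n. M i j * v0 j) = 0" by (rule kernel[OF h psd])
    then have "\<forall>i<n. v0 i = 0" by (rule ns)
    then have "nrm n v0 = 0" unfolding nrm_def by simp
    then show False using v0(1) unfolding SPH_def by simp
  qed
  have "Re (qf n M v) \<ge> c * nrm n v" for v
  proof (cases "nrm n v = 0")
    case True
    then have "qf n M v = qf n M (\<lambda>_. 0)" using nrm_zero by (intro qf_cong) blast
    then show ?thesis using True by (simp add: qf_def)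
  next
    case nz: False
    define N where "N = nrm n v"
    have N: "N > 0" using nz nrm_nonneg[of n v] unfolding N_def by linarith
    define s where "s = 1 / sqrt N"
    have s: "s > 0" using N by (simp add: s_def)
    have s2: "s^2 * N = 1" using N by (simp add: s_def power_divide)
    define w where "w i = (if i < n then of_real s * v i else 0)" for i
    have wmem: "w \<in> SPH n"
    proof -
      have "w i \<in> (if i<n then K0 else {0})" for i
      proof (cases "i < n")
        case True
        have "(cmod (v i))^2 \<le> N" using nrm_ge[OF True] unfolding N_def .
        then have "cmod (v i) \<le> sqrt N" using real_le_rsqrt by blast
        then have "s * cmod (v i) \<le> 1" using s N by (simp add: s_def field_simps)
        then show ?thesis using True s by (auto simp: w_def norm_mult intro!: K0_mem)
      qed (simp add: w_def)
      moreover have "nrm n w = 1"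
      proof -
        have "nrm n w = (\<Sum>i<n. s^2 * (cmod (v i))^2)" unfolding nrm_def w_def
          using s by (intro sum.cong refl) (simp add: norm_mult power_mult_distrib)
        also have "\<dots> = s^2 * N" unfolding N_def nrm_def by (simp add: sum_distrib_left)
        finally show ?thesis using s2 by simp
      qed
      ultimately show ?thesis unfolding SPH_def by blast
    qed
    have "qf n M w = qf n M (\<lambda>i. of_real s * v i)" by (rule qf_cong) (simp add: w_def)
    also have "\<dots> = of_real (s^2) * qf n M v" by (simp add: qf_scale power2_eq_square)
    finally have "Re (qf n M w) = s^2 * Re (qf n M v)" by simp
    moreover have "c \<le> Re (qf n M w)" using v0(2) wmem unfolding c_def by blast
    ultimately have "c * N \<le> s^2 * N * Re (qf n M v)" using N by (simp add: mult_right_mono algebra_simps)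
    then show ?thesis using s2 unfolding N_def by simp
  qed
  then show ?thesis using c by blast
qed

lemma cont_neg_nbhd:
  fixes g :: "real \<Rightarrow> real"
  assumes "continuous_on {0..1} g" "t0 \<in> {0..1}" "g t0 < 0"
  shows "\<exists>d>0. \<forall>t\<in>{0..1}. \<bar>t - t0\<bar> < d \<longrightarrow> g t < 0"
proof -
  from assms(1,2) have "\<forall>e>0. \<exists>d>0. \<forall>t\<in>{0..1}. dist t t0 < d \<longrightarrow> dist (g t) (g t0) < e"
    unfolding continuous_on_iff by blast
  then obtain d where d: "d > 0" "\<forall>t\<in>{0..1}. dist t t0 < d \<longrightarrow> dist (g t) (g t0) < - g t0"
    using assms(3) by (metis neg_0_less_iff_less)
  show ?thesis
  proof (intro exI[of _ d] conjI ballI impI)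
    fix t :: real assume "t \<in> {0..1}" "\<bar>t - t0\<bar> < d"
    then have "dist (g t) (g t0) < - g t0" using d by (simp add: dist_real_def)
    then show "g t < 0" by (simp add: dist_real_def)
  qed (use d in simp)
qed

lemma cont_small_nbhd:
  fixes g :: "real \<Rightarrow> real"
  assumes "continuous_on {0..1} g" "t0 \<in> {0..1}" "g t0 = 0" "c > 0"
  shows "\<exists>d>0. \<forall>t\<in>{0..1}. \<bar>t - t0\<bar> < d \<longrightarrow> g t < c"
proof -
  from assms(1,2) have "\<forall>e>0. \<exists>d>0. \<forall>t\<in>{0..1}. dist t t0 < d \<longrightarrow> dist (g t) (g t0) < e"
    unfolding continuous_on_iff by blast
  then obtain d where d: "d > 0" "\<forall>t\<in>{0..1}. dist t t0 < d \<longrightarrow> dist (g t) (g t0) < c"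
    using assms(4) by blast
  show ?thesis
  proof (intro exI[of _ d] conjI ballI impI)
    fix t :: real assume "t \<in> {0..1}" "\<bar>t - t0\<bar> < d"
    then have "dist (g t) (g t0) < c" using d by (simp add: dist_real_def)
    then show "g t < c" using assms(3) by (simp add: dist_real_def)
  qed (use d in simp)
qed

lemma path_psd:
  fixes M :: "real \<Rightarrow> nat \<Rightarrow> nat \<Rightarrow> complex"
  assumes cont: "\<And>i j. i<n \<Longrightarrow> j<n \<Longrightarrow> continuous_on {0..1} (\<lambda>t. M t i j)"
    and h: "\<And>t. herm n (M t)"
    and ns: "\<And>t v. 0 \<le> t \<Longrightarrow> t < 1 \<Longrightarrow> (\<forall>i<n. (\<Sum>j<n. M t i j * v j) = 0) \<Longrightarrow> (\<forall>i<n. v i = 0)"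
    and p0: "\<And>v. Re (qf n (M 0) v) \<ge> 0"
  shows "Re (qf n (M 1) v) \<ge> 0"
proof -
  have qcont: "continuous_on {0..1} (\<lambda>t. Re (qf n (M t) w))" for w
    unfolding qf_def
    apply (rule continuous_on_Re) apply (rule continuous_on_sum) apply (rule continuous_on_sum)
    apply (rule continuous_on_mult) apply (rule continuous_on_mult) apply (rule continuous_on_const)
      apply (rule cont) apply simp apply simp by (rule continuous_on_const)
  define N where "N = {t. 0 \<le> t \<and> t < 1 \<and> (\<exists>v. Re (qf n (M t) v) < 0)}"
  have Nempty: "N = {}"
  proof (rule ccontr)
    assume Nne: "N \<noteq> {}"
    have bdd: "bdd_below N" unfolding N_def by (rule bdd_belowI[of _ 0]) auto
    define t0 where "t0 = Inf N"
    have t0_ge: "t0 \<ge> 0" unfolding t0_def using Nne by (intro cInf_greatest) (auto simp: N_def)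
    have t0_low: "\<And>t. t \<in> N \<Longrightarrow> t0 \<le> t" unfolding t0_def using bdd by (intro cInf_lower)
    obtain t' where "t' \<in> N" using Nne by blast
    then have t0_lt: "t0 < 1" using t0_low[of t'] unfolding N_def by auto
    have t0in: "t0 \<in> {0..1}" using t0_ge t0_lt by auto
    have psd0: "Re (qf n (M t0) w) \<ge> 0" for w
    proof (rule ccontr)
      assume neg: "\<not> Re (qf n (M t0) w) \<ge> 0"
      then obtain d where d: "d > 0" "\<forall>t\<in>{0..1}. \<bar>t - t0\<bar> < d \<longrightarrow> Re (qf n (M t) w) < 0"
        using cont_neg_nbhd[OF qcont t0in] by force
      have "t0 \<noteq> 0" using neg p0[of w] by auto
      then have t0p: "t0 > 0" using t0_ge by simp
      define t1 where "t1 = max 0 (t0 - d/2)"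
      have t1: "t1 \<in> {0..1}" "\<bar>t1 - t0\<bar> < d" "t1 < t0" "t1 < 1"
        using d t0p t0_lt by (auto simp: t1_def)
      have "Re (qf n (M t1) w) < 0" using d(2) t1(1,2) by blast
      then have "t1 \<in> N" using t1 unfolding N_def by auto
      then show False using t0_low t1 by force
    qed
    obtain c where c: "c > 0" "\<forall>v. Re (qf n (M t0) v) \<ge> c * nrm n v"
      using coercive[OF h psd0 ns[OF t0_ge t0_lt]] by blast
    define E where "E t = (\<Sum>i<n. \<Sum>j<n. cmod (M t i j - M t0 i j))" for t
    have Econt: "continuous_on {0..1} E" unfolding E_def
      apply (rule continuous_on_sum) apply (rule continuous_on_sum) apply (rule continuous_on_norm)
      apply (rule continuous_on_diff) apply (rule cont) apply simp apply simp by (rule continuous_on_const)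
    have E0: "E t0 = 0" unfolding E_def by simp
    obtain d where d: "d > 0" "\<forall>t\<in>{0..1}. \<bar>t - t0\<bar> < d \<longrightarrow> E t < c"
      using cont_small_nbhd[OF Econt t0in E0 c(1)] by blast
    have good: "Re (qf n (M t) v) \<ge> 0" if t: "t \<in> {0..1}" "\<bar>t - t0\<bar> < d" for t v
    proof -
      have "\<bar>Re (qf n (M t) v) - Re (qf n (M t0) v)\<bar> \<le> cmod (qf n (M t) v - qf n (M t0) v)"
        by (metis abs_Re_le_cmod minus_complex.simps(1))
      also have "\<dots> \<le> E t * nrm n v" unfolding E_def by (rule perturb)
      finally have a: "\<bar>Re (qf n (M t) v) - Re (qf n (M t0) v)\<bar> \<le> E t * nrm n v" .
      have "E t < c" using d(2) t by blast
      then have "E t * nrm n v \<le> c * nrm n v" using nrm_nonneg[of n v] by (simp add: mult_right_mono)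
      then show ?thesis using a c(2)[rule_format, of v] by linarith
    qed
    have "\<exists>t\<in>N. t < t0 + d" unfolding t0_def using Nne bdd d(1)
      by (subst cInf_less_iff[symmetric]) (auto simp: t0_def[symmetric])
    then obtain t where t: "t \<in> N" "t < t0 + d" by blast
    have "t0 \<le> t" using t0_low t(1) .
    then have "t \<in> {0..1}" "\<bar>t - t0\<bar> < d" using t unfolding N_def by auto
    then have "\<forall>v. Re (qf n (M t) v) \<ge> 0" using good by blast
    moreover obtain v where "Re (qf n (M t) v) < 0" using t(1) unfolding N_def by blast
    ultimately show False by (meson not_le)
  qed
  show ?thesis
  proof (rule ccontr)
    assume neg: "\<not> Re (qf n (M 1) v) \<ge> 0"
    then obtain d where d: "d > 0" "\<forall>t\<in>{0..1}. \<bar>t - 1\<bar> < d \<longrightarrow> Re (qf n (M t) v) < 0"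
      using cont_neg_nbhd[OF qcont, of 1 v] by force
    define t1 where "t1 = max 0 (1 - d/2)"
    have t1: "t1 \<in> {0..1}" "\<bar>t1 - 1\<bar> < d" "t1 < 1" using d by (auto simp: t1_def)
    have "Re (qf n (M t1) v) < 0" using d(2) t1(1,2) by blast
    then have "t1 \<in> N" using t1 unfolding N_def by auto
    then show False using Nempty by simp
  qed
qed



lemma hb_herm: "hb d x y q p s r = cnj (hb d x y p q r s)"
  unfolding hb_def by (auto simp: mult.commute)

lemma hfun_herm: "herm n (hfun d x y)"
  unfolding herm_def hfun_def using hb_herm by blast

lemma cont_if0[continuous_intros]: "continuous_on S f \<Longrightarrow> continuous_on S (\<lambda>t. if c then f t else 0)"
  by (cases c) auto

lemma cont_zz: 
  assumes "\<And>a b. continuous_on S (\<lambda>t. x t a b)" "\<And>a b. continuous_on S (\<lambda>t. y t a b)"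
  shows "continuous_on S (\<lambda>t. zz (x t) (y t) p k l)"
  using assms by (cases "p = 0") (auto simp: zz_def)

lemma cont_hfun:
  assumes "\<And>a b. continuous_on S (\<lambda>t. x t a b)" "\<And>a b. continuous_on S (\<lambda>t. y t a b)"
  shows "continuous_on S (\<lambda>t. hfun d (x t) (y t) i j)"
  unfolding hfun_def hb_def
  by (intro continuous_intros cont_zz[OF assms])

lemma hb_cong:
  assumes "\<And>a b. a < d \<Longrightarrow> b < d \<Longrightarrow> x a b = x' a b" "\<And>a b. a < d \<Longrightarrow> b < d \<Longrightarrow> y a b = y' a b"
    and rs: "r < d*d" "s < d*d"
  shows "hb d x y p q r s = hb d x' y' p q r s"
proof -
  have dp: "0 < d" using rs by (cases "d = 0") auto
  have zc: "a < d \<Longrightarrow> b < d \<Longrightarrow> zz x y p a b = zz x' y' p a b" for p a b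
    using assms by (simp add: zz_def)
  have r: "r mod d < d" "r div d < d" "s mod d < d" "s div d < d"
    using dp rs by (auto simp: less_mult_imp_div_less)
  have e1: "(\<Sum>i<d. \<Sum>k<d. cnj (zz x y p k i) * zz x y q k i) = (\<Sum>i<d. \<Sum>k<d. cnj (zz x' y' p k i) * zz x' y' q k i)"
    by (intro sum.cong refl) (simp add: zc)
  have e2: "(\<Sum>k<d. cnj (zz x y p k (r div d)) * zz x y q k (s div d)) = (\<Sum>k<d. cnj (zz x' y' p k (r div d)) * zz x' y' q k (s div d))"
    by (intro sum.cong refl) (simp add: zc r)
  have e3: "(\<Sum>k<d. cnj (zz x y p (r mod d) k) * zz x y q (s mod d) k) = (\<Sum>k<d. cnj (zz x' y' p (r mod d) k) * zz x' y' q (s mod d) k)"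
    by (intro sum.cong refl) (simp add: zc r)
  have e4: "cnj (zz x y p (r mod d) (r div d)) * zz x y q (s mod d) (s div d) = cnj (zz x' y' p (r mod d) (r div d)) * zz x' y' q (s mod d) (s div d)"
    by (simp add: zc r)
  show ?thesis unfolding hb_def e1 e2 e3 e4 by (rule refl)
qed

lemma hfun_cong:
  assumes "\<And>a b. a < d \<Longrightarrow> b < d \<Longrightarrow> x a b = x' a b" "\<And>a b. a < d \<Longrightarrow> b < d \<Longrightarrow> y a b = y' a b"
    and dp: "0 < d"
  shows "hfun d x y i j = hfun d x' y' i j"
  unfolding hfun_def using dp by (intro hb_cong assms) auto



definition x0 :: "nat \<Rightarrow> nat \<Rightarrow> complex" where "x0 a b = (if a = b then 1 else 0)"
definition e0 :: "nat \<Rightarrow> nat \<Rightarrow> complex" where "e0 a b = (if a = 0 \<and> b = 0 then 1 else 0)"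

lemma ind_mult: "((if P then 1 else 0) :: complex) * (if Q then 1 else 0) = (if P \<and> Q then 1 else 0)"
  by simp

lemma zb_cnj: "cnj (zz x0 e0 p a b) = zz x0 e0 p a b"
  by (simp add: zz_def x0_def e0_def)

lemma zb_sym: "zz x0 e0 p a b = zz x0 e0 p b a"
  by (auto simp: zz_def x0_def e0_def)

lemma S2b:
  assumes "a < d" "b < d" "p < 2" "q < 2"
  shows "(\<Sum>k<d. zz x0 e0 p k a * zz x0 e0 q k b) =
     (if a = b then (if p = 0 \<and> q = 0 then 1 else (if a = 0 then 1 else 0)) else 0)"
proof -
  define k0 where "k0 = (if p = 0 then a else 0)"
  define c :: complex where "c = (if a = b then (if p = 0 \<and> q = 0 then 1 else (if a = 0 then 1 else 0)) else 0)"
  have k0: "k0 < d" using assms by (auto simp: k0_def)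
  have "(\<Sum>k<d. zz x0 e0 p k a * zz x0 e0 q k b) = (\<Sum>k<d. if k = k0 then c else 0)"
  proof (intro sum.cong refl)
    fix k
    show "zz x0 e0 p k a * zz x0 e0 q k b = (if k = k0 then c else 0)"
      using assms(3,4) unfolding less_2_cases_iff
      by (elim disjE) (auto simp: zz_def x0_def e0_def k0_def c_def)
  qed
  also have "\<dots> = c" using k0 by (simp add: sum.delta)
  finally show ?thesis unfolding c_def .
qed

lemma S3b:
  assumes "a < d" "b < d" "p < 2" "q < 2"
  shows "(\<Sum>k<d. zz x0 e0 p a k * zz x0 e0 q b k) =
     (if a = b then (if p = 0 \<and> q = 0 then 1 else (if a = 0 then 1 else 0)) else 0)"
  using S2b[OF assms] zb_sym by simp

lemma Gb:
  assumes "0 < d" "p < 2" "q < 2"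
  shows "(\<Sum>i<d. \<Sum>k<d. cnj (zz x0 e0 p k i) * zz x0 e0 q k i) = (if p = 0 \<and> q = 0 then of_nat d else 1)"
proof -
  have "(\<Sum>i<d. \<Sum>k<d. cnj (zz x0 e0 p k i) * zz x0 e0 q k i) = (\<Sum>i<d. (if p = 0 \<and> q = 0 then 1 else (if i = 0 then 1 else 0)))"
    using assms by (intro sum.cong refl) (simp add: zb_cnj S2b)
  also have "\<dots> = (if p = 0 \<and> q = 0 then of_nat d else 1)" using assms by (simp add: sum.delta)
  finally show ?thesis .
qed

definition Cb :: "nat \<Rightarrow> nat \<Rightarrow> nat \<Rightarrow> nat \<Rightarrow> real" where
  "Cb d p q r = (if p = 0 \<and> q = 0 then real d - 1 else 1 - (if r div d = 0 then 1/2 else 0) - (if r mod d = 0 then 1/2 else 0))"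
definition wb :: "nat \<Rightarrow> nat \<Rightarrow> nat \<Rightarrow> real" where
  "wb d p r = (if p = 0 then (if r mod d = r div d then 1 else 0) else (if r mod d = 0 \<and> r div d = 0 then 1 else 0))"

lemma zb_wb: "zz x0 e0 p (r mod d) (r div d) = of_real (wb d p r)"
  by (simp add: zz_def x0_def e0_def wb_def)

lemma base_hb:
  assumes dp: "0 < d" and pq: "p < 2" "q < 2" and rs: "r < d*d" "s < d*d"
  shows "hb d x0 e0 p q r s = (if r = s then of_real (Cb d p q r) else 0) + 1/4 * of_real (wb d p r * wb d q s)"
proof -
  have r: "r mod d < d" "r div d < d" "s mod d < d" "s div d < d"
    using dp rs by (auto simp: less_mult_imp_div_less)
  have rs_eq: "r = s" if "r mod d = s mod d" "r div d = s div d"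
    using that div_mult_mod_eq[of r d] div_mult_mod_eq[of s d] by metis
  have e2: "(\<Sum>k<d. cnj (zz x0 e0 p k (r div d)) * zz x0 e0 q k (s div d)) =
     (if r div d = s div d then (if p = 0 \<and> q = 0 then 1 else (if r div d = 0 then 1 else 0)) else 0)"
    unfolding zb_cnj by (rule S2b) (use r pq in auto)
  have e3: "(\<Sum>k<d. cnj (zz x0 e0 p (r mod d) k) * zz x0 e0 q (s mod d) k) =
     (if r mod d = s mod d then (if p = 0 \<and> q = 0 then 1 else (if r mod d = 0 then 1 else 0)) else 0)"
    unfolding zb_cnj by (rule S3b) (use r pq in auto)
  have e4: "cnj (zz x0 e0 p (r mod d) (r div d)) * zz x0 e0 q (s mod d) (s div d) = of_real (wb d p r * wb d q s)"
    unfolding zb_cnj zb_wb by simp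
  show ?thesis
    unfolding hb_def Gb[OF dp pq] e2 e3 e4
    using rs_eq by (auto simp: Cb_def)
qed

lemma sum_split2: fixes m :: nat shows "(\<Sum>i<2*m. f i) = (\<Sum>r<m. f r + f (m + r))"
proof -
  have U: "{..<2*m} = {..<m} \<union> (\<lambda>r. m + r) ` {..<m}"
  proof -
    { fix i assume "i < 2*m" "\<not> i < m"
      then have "i \<in> (\<lambda>r. m + r) ` {..<m}" by (intro image_eqI[of _ _ "i - m"]) auto }
    then show ?thesis by auto
  qed
  have D: "{..<m} \<inter> (\<lambda>r. m + r) ` {..<m} = {}" by auto
  have "(\<Sum>i<2*m. f i) = (\<Sum>i<m. f i) + (\<Sum>i\<in>(\<lambda>r. m + r) ` {..<m}. f i)"
    unfolding U by (rule sum.union_disjoint) (use D in auto)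
  also have "(\<Sum>i\<in>(\<lambda>r. m + r) ` {..<m}. f i) = (\<Sum>r<m. f (m + r))"
    by (subst sum.reindex) (auto simp: inj_on_def)
  finally show ?thesis by (simp add: sum.distrib)
qed

lemma form2_nonneg:
  fixes x y :: complex and a k :: real
  assumes "0 \<le> k" "k \<le> a"
  shows "0 \<le> Re (cnj x * of_real a * x + cnj x * of_real k * y + cnj y * of_real k * x + cnj y * of_real k * y)"
proof -
  have e: "Re (cnj x * of_real a * x + cnj x * of_real k * y + cnj y * of_real k * x + cnj y * of_real k * y)
      = k * ((Re x + Re y)^2 + (Im x + Im y)^2) + (a - k) * ((Re x)^2 + (Im x)^2)"
    by (simp add: power2_eq_square algebra_simps)
  show ?thesis unfolding e using assms by (intro add_nonneg_nonneg mult_nonneg_nonneg) auto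
qed

lemma qf_rank1:
  fixes w :: "nat \<Rightarrow> real"
  shows "0 \<le> Re (\<Sum>i<n. \<Sum>j<n. cnj (v i) * (1/4 * of_real (w i * w j)) * v j)"
proof -
  define S where "S = (\<Sum>j<n. of_real (w j) * v j)"
  have "(\<Sum>i<n. \<Sum>j<n. cnj (v i) * (1/4 * of_real (w i * w j)) * v j) = 1/4 * (cnj S * S)"
    unfolding S_def by (simp add: sum_product sum_distrib_left algebra_simps)
  also have "Re \<dots> = 1/4 * (cmod S)^2" by (simp add: complex_norm_square[symmetric] mult.commute)
  finally have eq: "Re (\<Sum>i<n. \<Sum>j<n. cnj (v i) * (1/4 * of_real (w i * w j)) * v j) = 1/4 * (cmod S)^2" .
  show ?thesis unfolding eq by simp
qed

lemma sum_split2_2: fixes m :: nat shows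
  "(\<Sum>i<2*m. \<Sum>j<2*m. f i j) = (\<Sum>r<m. \<Sum>s<m. f r s + f r (m+s) + f (m+r) s + f (m+r) (m+s))"
  unfolding sum_split2 by (simp add: sum.distrib algebra_simps)

lemma base_psd:
  assumes d2: "2 \<le> d"
  shows "0 \<le> Re (qf (2*(d*d)) (hfun d x0 e0) v)"
proof -
  define m where "m = d*d"
  have dp: "0 < d" using d2 by simp
  have mp: "0 < m" using dp by (simp add: m_def)
  define A where "A i j = (if i mod m = j mod m then complex_of_real (Cb d (i div m) (j div m) (i mod m)) else 0)" for i j
  define B where "B i j = 1/4 * complex_of_real (wb d (i div m) (i mod m) * wb d (j div m) (j mod m))" for i j
  have H: "hfun d x0 e0 i j = A i j + B i j" if "i < 2*m" "j < 2*m" for i j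
  proof -
    have "i div m < 2" "j div m < 2" using that by (auto simp: less_mult_imp_div_less)
    moreover have "i mod m < d*d" "j mod m < d*d" using mp by (auto simp: m_def)
    ultimately show ?thesis unfolding hfun_def A_def B_def m_def
      using base_hb[OF dp] by simp
  qed
  have "qf (2*m) (hfun d x0 e0) v = (\<Sum>i<2*m. \<Sum>j<2*m. cnj (v i) * A i j * v j) + (\<Sum>i<2*m. \<Sum>j<2*m. cnj (v i) * B i j * v j)"
    unfolding qf_def sum.distrib[symmetric] using H by (intro sum.cong refl) (simp add: algebra_simps)
  moreover have "0 \<le> Re (\<Sum>i<2*m. \<Sum>j<2*m. cnj (v i) * B i j * v j)"
    unfolding B_def by (rule qf_rank1)
  moreover have "0 \<le> Re (\<Sum>i<2*m. \<Sum>j<2*m. cnj (v i) * A i j * v j)"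
  proof -
    define k where "k r = 1 - (if r div d = 0 then 1/2 else 0) - (if r mod d = 0 then 1/2 else (0::real))" for r
    have divs: "r div m = 0" "r mod m = r" "(m + r) div m = 1" "(m + r) mod m = r" if "r < m" for r
      using that mp by auto
    have "(\<Sum>i<2*m. \<Sum>j<2*m. cnj (v i) * A i j * v j) =
      (\<Sum>r<m. cnj (v r) * of_real (real d - 1) * v r + cnj (v r) * of_real (k r) * v (m+r)
            + cnj (v (m+r)) * of_real (k r) * v r + cnj (v (m+r)) * of_real (k r) * v (m+r))"
      unfolding sum_split2_2
    proof (intro sum.cong refl)
      fix r assume r: "r \<in> {..<m}"
      have "(\<Sum>s<m. cnj (v r) * A r s * v s + cnj (v r) * A r (m + s) * v (m + s) +
          cnj (v (m + r)) * A (m + r) s * v s + cnj (v (m + r)) * A (m + r) (m + s) * v (m + s))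
        = (\<Sum>s<m. if s = r then cnj (v r) * of_real (real d - 1) * v r + cnj (v r) * of_real (k r) * v (m+r)
            + cnj (v (m+r)) * of_real (k r) * v r + cnj (v (m+r)) * of_real (k r) * v (m+r) else 0)"
      proof (intro sum.cong refl)
        fix s assume s: "s \<in> {..<m}"
        show "cnj (v r) * A r s * v s + cnj (v r) * A r (m + s) * v (m + s) +
          cnj (v (m + r)) * A (m + r) s * v s + cnj (v (m + r)) * A (m + r) (m + s) * v (m + s)
          = (if s = r then cnj (v r) * of_real (real d - 1) * v r + cnj (v r) * of_real (k r) * v (m+r)
            + cnj (v (m+r)) * of_real (k r) * v r + cnj (v (m+r)) * of_real (k r) * v (m+r) else 0)"
          using r s divs[of r] divs[of s] by (auto simp: A_def Cb_def k_def m_def)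
      qed
      also have "\<dots> = cnj (v r) * of_real (real d - 1) * v r + cnj (v r) * of_real (k r) * v (m+r)
            + cnj (v (m+r)) * of_real (k r) * v r + cnj (v (m+r)) * of_real (k r) * v (m+r)"
        using r by (simp add: sum.delta')
      finally show "(\<Sum>s<m. cnj (v r) * A r s * v s + cnj (v r) * A r (m + s) * v (m + s) +
          cnj (v (m + r)) * A (m + r) s * v s + cnj (v (m + r)) * A (m + r) (m + s) * v (m + s)) =
          cnj (v r) * of_real (real d - 1) * v r + cnj (v r) * of_real (k r) * v (m+r)
            + cnj (v (m+r)) * of_real (k r) * v r + cnj (v (m+r)) * of_real (k r) * v (m+r)" .
    qed
    also have "0 \<le> Re \<dots>"
      unfolding Re_sum
    proof (intro sum_nonneg)
      fix r
      have "0 \<le> k r" "k r \<le> 1" by (auto simp: k_def)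
      moreover have "1 \<le> real d - 1" using d2 by simp
      ultimately show "0 \<le> Re (cnj (v r) * of_real (real d - 1) * v r + cnj (v r) * of_real (k r) * v (m+r)
            + cnj (v (m+r)) * of_real (k r) * v r + cnj (v (m+r)) * of_real (k r) * v (m+r))"
        by (intro form2_nonneg) auto
    qed
    finally show ?thesis .
  qed
  ultimately show ?thesis unfolding m_def by simp
qed



lemma det_kernel:
  fixes A :: "complex mat"
  assumes A: "A \<in> carrier_mat n n" and dA: "det A \<noteq> 0" and h: "\<forall>i<n. (\<Sum>j<n. A $$ (i,j) * v j) = 0"
  shows "\<forall>i<n. v i = 0"
proof (rule ccontr)
  assume "\<not> (\<forall>i<n. v i = 0)"
  then obtain i0 where i0: "i0 < n" "v i0 \<noteq> 0" by blast
  define V where "V = vec n v"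
  have V: "V \<in> carrier_vec n" unfolding V_def by simp
  have V0: "V \<noteq> 0\<^sub>v n"
  proof
    assume "V = 0\<^sub>v n"
    then have "V $ i0 = 0" using i0 by simp
    then show False using i0 unfolding V_def by simp
  qed
  have AV: "A *\<^sub>v V = 0\<^sub>v n"
  proof (rule eq_vecI)
    fix i assume "i < dim_vec (0\<^sub>v n)"
    then have i: "i < n" by simp
    have "(A *\<^sub>v V) $ i = (\<Sum>j\<in>{0..<n}. A $$ (i,j) * v j)"
      using A i by (simp add: scalar_prod_def V_def)
    also have "\<dots> = 0" using h i by (simp add: atLeast0LessThan)
    finally show "(A *\<^sub>v V) $ i = 0\<^sub>v n $ i" using i by simp
  qed (use A in simp)
  have "det A = 0" using det_0_iff_vec_prod_zero[OF A] V V0 AV by blast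
  then show False using dA by simp
qed

lemma generic_of_minor:
  assumes A: "A \<in> carrier_mat d d" and B: "B \<in> carrier_mat d d" and d2: "2 \<le> d" and dA: "det A \<noteq> 0"
    and mn: "A $$ (0,0) * B $$ (1,1) - A $$ (1,1) * B $$ (0,0) \<noteq> 0"
  shows "generic_pair A B"
  unfolding generic_pair_def
proof (intro conjI allI impI)
  fix a b :: complex
  assume eq: "a \<cdot>\<^sub>m A + b \<cdot>\<^sub>m B = 0\<^sub>m (dim_row A) (dim_col A)"
  have e: "a * A $$ (k,k) + b * B $$ (k,k) = 0" if "k < d" for k
  proof -
    have "(a \<cdot>\<^sub>m A + b \<cdot>\<^sub>m B) $$ (k,k) = 0" using eq A that by simp
    then show ?thesis using A B that by simp
  qed
  have e0: "a * A $$ (0,0) + b * B $$ (0,0) = 0" and e1: "a * A $$ (1,1) + b * B $$ (1,1) = 0"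
    using e[of 0] e[of 1] d2 by auto
  have "a * (A $$ (0,0) * B $$ (1,1) - A $$ (1,1) * B $$ (0,0)) = B $$ (1,1) * (a * A $$ (0,0) + b * B $$ (0,0)) - B $$ (0,0) * (a * A $$ (1,1) + b * B $$ (1,1))"
    by (simp add: algebra_simps)
  then have "a * (A $$ (0,0) * B $$ (1,1) - A $$ (1,1) * B $$ (0,0)) = 0" using e0 e1 by simp
  then show "a = 0" using mn by simp
  have "b * (A $$ (0,0) * B $$ (1,1) - A $$ (1,1) * B $$ (0,0)) = A $$ (0,0) * (a * A $$ (1,1) + b * B $$ (1,1)) - A $$ (1,1) * (a * A $$ (0,0) + b * B $$ (0,0))"
    by (simp add: algebra_simps)
  then have "b * (A $$ (0,0) * B $$ (1,1) - A $$ (1,1) * B $$ (0,0)) = 0" using e0 e1 by simp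
  then show "b = 0" using mn by simp
next
  have "1 \<cdot>\<^sub>m A + 0 \<cdot>\<^sub>m B = A"
    by (rule eq_matI) (use A B in auto)
  then show "\<exists>a b. det (a \<cdot>\<^sub>m A + b \<cdot>\<^sub>m B) \<noteq> 0" using dA by metis
qed

definition Em :: "nat \<Rightarrow> complex mat" where "Em d = mat d d (\<lambda>(a,b). if a = 0 \<and> b = 0 then 1 else 0)"
definition Xz :: "nat \<Rightarrow> complex mat \<Rightarrow> complex \<Rightarrow> complex mat" where "Xz d X w = (1 - w) \<cdot>\<^sub>m 1\<^sub>m d + w \<cdot>\<^sub>m X"
definition Yz :: "nat \<Rightarrow> complex mat \<Rightarrow> complex \<Rightarrow> complex mat" where "Yz d Y w = (1 - w) \<cdot>\<^sub>m Em d + w \<cdot>\<^sub>m Y"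

lemma Xz_carrier: "X \<in> carrier_mat d d \<Longrightarrow> Xz d X w \<in> carrier_mat d d" by (simp add: Xz_def)
lemma Yz_carrier: "Y \<in> carrier_mat d d \<Longrightarrow> Yz d Y w \<in> carrier_mat d d" by (simp add: Yz_def Em_def)
lemma Xz_entry: "X \<in> carrier_mat d d \<Longrightarrow> a < d \<Longrightarrow> b < d \<Longrightarrow> Xz d X w $$ (a,b) = (1 - w) * x0 a b + w * X $$ (a,b)"
  by (simp add: Xz_def x0_def)
lemma Yz_entry: "Y \<in> carrier_mat d d \<Longrightarrow> a < d \<Longrightarrow> b < d \<Longrightarrow> Yz d Y w $$ (a,b) = (1 - w) * e0 a b + w * Y $$ (a,b)"
  by (simp add: Yz_def e0_def Em_def)

lemma det_Xz:
  assumes X: "X \<in> carrier_mat d d"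
  shows "det (Xz d X 0) \<noteq> 0" "finite {w. det (Xz d X w) = 0}"
proof -
  have "Xz d X 0 = 1\<^sub>m d" by (rule eq_matI) (use X in \<open>auto simp: Xz_def\<close>)
  then show "det (Xz d X 0) \<noteq> 0" by simp
  have cp: "char_poly X \<noteq> 0" using degree_monic_char_poly[OF X] by auto
  have "{w. det (Xz d X w) = 0} \<subseteq> (\<lambda>\<rho>. 1 / (1 - \<rho>)) ` {\<rho>. poly (char_poly X) \<rho> = 0}"
  proof
    fix w assume w: "w \<in> {w. det (Xz d X w) = 0}"
    have w0: "w \<noteq> 0" using w \<open>det (Xz d X 0) \<noteq> 0\<close> by auto
    define e where "e = (w - 1) / w"
    have "Xz d X w = w \<cdot>\<^sub>m char_matrix X e"
      by (rule eq_matI) (use X w0 in \<open>auto simp: Xz_def char_matrix_def e_def field_simps\<close>)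
    then have "det (Xz d X w) = w ^ d * det (char_matrix X e)"
    proof -
      have "dim_col (char_matrix X e) = d" using char_matrix_closed[OF X, of e] by (rule carrier_matD(2))
      then show ?thesis using \<open>Xz d X w = w \<cdot>\<^sub>m char_matrix X e\<close> by simp
    qed
    then have "det (char_matrix X e) = 0" using w w0 by simp
    then have "det (- char_matrix X e) = 0" using det_0_negate[of "char_matrix X e" d] X by simp
    then have "poly (char_poly X) e = 0" using char_poly_matrix[OF X] by simp
    moreover have "w = 1 / (1 - e)" using w0 by (simp add: e_def field_simps)
    ultimately show "w \<in> (\<lambda>\<rho>. 1 / (1 - \<rho>)) ` {\<rho>. poly (char_poly X) \<rho> = 0}" by blast
  qed
  then show "finite {w. det (Xz d X w) = 0}"
    using finite_subset poly_roots_finite[OF cp] by blast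
qed

lemma minor_finite:
  assumes X: "X \<in> carrier_mat d d" and Y: "Y \<in> carrier_mat d d" and d2: "2 \<le> d"
  shows "finite {w. Xz d X w $$ (0,0) * Yz d Y w $$ (1,1) - Xz d X w $$ (1,1) * Yz d Y w $$ (0,0) = 0}"
    "Xz d X 0 $$ (0,0) * Yz d Y 0 $$ (1,1) - Xz d X 0 $$ (1,1) * Yz d Y 0 $$ (0,0) \<noteq> 0"
proof -
  define P where "P = [:1, X $$ (0,0) - 1:] * [:0, Y $$ (1,1):] - [:1, X $$ (1,1) - 1:] * [:1, Y $$ (0,0) - 1:]"
  have ev: "Xz d X w $$ (0,0) * Yz d Y w $$ (1,1) - Xz d X w $$ (1,1) * Yz d Y w $$ (0,0) = poly P w" for w
    using X Y d2 by (simp add: Xz_entry Yz_entry x0_def e0_def P_def algebra_simps)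
  have "poly P 0 = -1" by (simp add: P_def)
  then have "P \<noteq> 0" by auto
  then show "finite {w. Xz d X w $$ (0,0) * Yz d Y w $$ (1,1) - Xz d X w $$ (1,1) * Yz d Y w $$ (0,0) = 0}"
    unfolding ev by (rule poly_roots_finite)
  show "Xz d X 0 $$ (0,0) * Yz d Y 0 $$ (1,1) - Xz d X 0 $$ (1,1) * Yz d Y 0 $$ (0,0) \<noteq> 0"
    unfolding ev using \<open>poly P 0 = -1\<close> by simp
qed



lemma ent_Xz: "X \<in> carrier_mat d d \<Longrightarrow> a < d \<Longrightarrow> b < d \<Longrightarrow> ent (Xz d X w) a b = (1 - w) * x0 a b + w * X $$ (a,b)"
  by (simp add: ent_def Xz_entry)
lemma ent_Yz: "Y \<in> carrier_mat d d \<Longrightarrow> a < d \<Longrightarrow> b < d \<Longrightarrow> ent (Yz d Y w) a b = (1 - w) * e0 a b + w * Y $$ (a,b)"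
  by (simp add: ent_def Yz_entry)

theorem proposition6p2:
  fixes d :: nat
  assumes "d \<ge> 3"
    and "\<forall>X \<in> carrier_mat d d. \<forall>Y \<in> carrier_mat d d. generic_pair X Y \<longrightarrow> det (HH d X Y) \<noteq> 0"
  shows "\<forall>X \<in> carrier_mat d d. \<forall>Y \<in> carrier_mat d d. psd (HH d X Y)"
proof (intro ballI)
  fix X Y :: "complex mat" assume X: "X \<in> carrier_mat d d" and Y: "Y \<in> carrier_mat d d"
  have d2: "2 \<le> d" and dp: "0 < d" using assms(1) by auto
  define n where "n = 2*(d*d)"
  define mn where "mn w = Xz d X w $$ (0,0) * Yz d Y w $$ (1,1) - Xz d X w $$ (1,1) * Yz d Y w $$ (0,0)" for w
  define B where "B = {w. det (Xz d X w) = 0} \<union> {w. mn w = 0}"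
  have Bfin: "finite B" unfolding B_def mn_def using det_Xz(2)[OF X] minor_finite(1)[OF X Y d2] by blast
  have B0: "0 \<notin> B" unfolding B_def mn_def using det_Xz(1)[OF X] minor_finite(2)[OF X Y d2] by blast
  obtain s :: real where s: "s \<notin> (\<lambda>b. Im b / (Re b * (1 - Re b))) ` B"
    using ex_new_if_finite[OF infinite_UNIV_char_0 finite_imageI[OF Bfin]] by blast
  define z where "z t = complex_of_real t + \<i> * complex_of_real (s * t * (1 - t))" for t
  have zB: "z t \<notin> B" if t: "0 \<le> t" "t < 1" for t
  proof (cases "t = 0")
    case True then show ?thesis using B0 by (simp add: z_def)
  next
    case False
    then have tp: "0 < t" using t by simp
    show ?thesis
    proof
      assume "z t \<in> B"
      moreover have "Im (z t) / (Re (z t) * (1 - Re (z t))) = s"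
        using tp t by (simp add: z_def)
      ultimately show False using s by force
    qed
  qed
  define xf where "xf t a b = (1 - z t) * x0 a b + z t * X $$ (a,b)" for t a b
  define yf where "yf t a b = (1 - z t) * e0 a b + z t * Y $$ (a,b)" for t a b
  define M where "M t = hfun d (xf t) (yf t)" for t
  have zc: "continuous_on {0..1} z" unfolding z_def by (intro continuous_intros)
  have xc: "continuous_on {0..1} (\<lambda>t. xf t a b)" for a b unfolding xf_def by (intro continuous_intros zc)
  have yc: "continuous_on {0..1} (\<lambda>t. yf t a b)" for a b unfolding yf_def by (intro continuous_intros zc)
  have HHe: "HH d (Xz d X (z t)) (Yz d Y (z t)) $$ (i,j) = M t i j" if "i < n" "j < n" for t i j
  proof -
    have "HH d (Xz d X (z t)) (Yz d Y (z t)) $$ (i,j) = hfun d (ent (Xz d X (z t))) (ent (Yz d Y (z t))) i j"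
      by (rule HH_entry[OF Xz_carrier[OF X] Yz_carrier[OF Y]]) (use that in \<open>auto simp: n_def\<close>)
    also have "\<dots> = M t i j" unfolding M_def
      by (rule hfun_cong) (auto simp: ent_Xz[OF X] ent_Yz[OF Y] xf_def yf_def dp)
    finally show ?thesis .
  qed
  have path: "Re (qf n (M 1) v) \<ge> 0" for v
  proof (rule path_psd)
    show "continuous_on {0..1} (\<lambda>t. M t i j)" for i j unfolding M_def by (rule cont_hfun[OF xc yc])
    show "herm n (M t)" for t unfolding M_def by (rule hfun_herm)
    show "\<forall>i<n. v i = 0" if t: "0 \<le> t" "t < 1" and h: "\<forall>i<n. (\<Sum>j<n. M t i j * v j) = 0" for t v
    proof -
      have nb: "z t \<notin> B" using zB t by blast
      have gp: "generic_pair (Xz d X (z t)) (Yz d Y (z t))"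
        by (rule generic_of_minor[OF Xz_carrier[OF X] Yz_carrier[OF Y] d2]) (use nb in \<open>auto simp: B_def mn_def\<close>)
      then have dne: "det (HH d (Xz d X (z t)) (Yz d Y (z t))) \<noteq> 0"
        using assms(2) Xz_carrier[OF X] Yz_carrier[OF Y] by blast
      have car: "HH d (Xz d X (z t)) (Yz d Y (z t)) \<in> carrier_mat n n"
        unfolding n_def by (rule HH_carrier[OF Xz_carrier[OF X] Yz_carrier[OF Y]])
      show ?thesis
        by (rule det_kernel[OF car dne]) (use h HHe in simp)
    qed
    have "M 0 = hfun d x0 e0" unfolding M_def
    proof -
      have "xf 0 = x0" "yf 0 = e0" by (simp_all add: fun_eq_iff xf_def yf_def z_def)
      then show "hfun d (xf 0) (yf 0) = hfun d x0 e0" by simp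
    qed
    then show "Re (qf n (M 0) w) \<ge> 0" for w unfolding n_def using base_psd[OF d2] by simp
  qed
  have M1: "M 1 = hfun d (ent X) (ent Y)"
  proof -
    have "xf 1 = ent X" "yf 1 = ent Y" by (simp_all add: fun_eq_iff xf_def yf_def z_def ent_def)
    then show ?thesis unfolding M_def by simp
  qed
  have hh: "herm n (hfun d (ent X) (ent Y))" by (rule hfun_herm)
  have car: "HH d X Y \<in> carrier_mat n n" unfolding n_def by (rule HH_carrier[OF X Y])
  have ent: "HH d X Y $$ (i,j) = hfun d (ent X) (ent Y) i j" if "i < n" "j < n" for i j
    by (rule HH_entry[OF X Y]) (use that in \<open>auto simp: n_def\<close>)
  have dimr: "dim_row (HH d X Y) = n" using car by simp
  show "psd (HH d X Y)"
    unfolding psd_def Let_def dimr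
  proof (intro conjI ballI)
    show "HH d X Y \<in> carrier_mat n n" by (rule car)
    show "dag (HH d X Y) = HH d X Y"
    proof (rule eq_matI)
      fix i j assume "i < dim_row (HH d X Y)" "j < dim_col (HH d X Y)"
      then have ij: "i < n" "j < n" using car by auto
      have "dag (HH d X Y) $$ (i,j) = cnj (HH d X Y $$ (j,i))" using car ij by simp
      also have "\<dots> = cnj (hfun d (ent X) (ent Y) j i)" using ent ij by simp
      also have "hfun d (ent X) (ent Y) j i = cnj (hfun d (ent X) (ent Y) i j)" using hh ij unfolding herm_def by blast
      finally show "dag (HH d X Y) $$ (i,j) = HH d X Y $$ (i,j)" using ent ij by simp
    qed (use car in auto)
    fix v :: "complex vec" assume v: "v \<in> carrier_vec n"
    have q: "(\<Sum>i<n. cnj (v $ i) * (HH d X Y *\<^sub>v v) $ i) = qf n (hfun d (ent X) (ent Y)) (\<lambda>i. v $ i)"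
      unfolding qf_def
    proof (intro sum.cong refl)
      fix i assume i: "i \<in> {..<n}"
      have "(HH d X Y *\<^sub>v v) $ i = (\<Sum>j<n. hfun d (ent X) (ent Y) i j * v $ j)"
        using car v i ent by (auto simp: scalar_prod_def atLeast0LessThan intro!: sum.cong)
      then show "cnj (v $ i) * (HH d X Y *\<^sub>v v) $ i = (\<Sum>j<n. cnj (v $ i) * hfun d (ent X) (ent Y) i j * v $ j)"
        by (simp add: sum_distrib_left mult.assoc)
    qed
    show "Im (\<Sum>i<n. cnj (v $ i) * (HH d X Y *\<^sub>v v) $ i) = 0" unfolding q by (rule qf_real(2)[OF hh])
    show "0 \<le> Re (\<Sum>i<n. cnj (v $ i) * (HH d X Y *\<^sub>v v) $ i)" unfolding q using path[of "\<lambda>i. v $ i"] M1 by simp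
  qed
qed


end
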